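(* Let $\Phi_M,\Phi_N$ be measurement channels corresponding to two $2$-outcome qubit POVMs ($d=2$) $M=\{M_0,M_1\}$ and $N=\{N_0,N_1\}$ with $M_1\neq N_1$. The pair $\Phi_M,\Phi_N$ is a Maximal Entanglement Worst Case pair if and only if $\det(M_0-N_0)=0$.
   Context: The measurement channel of a POVM $M$ is $\Phi_M(\rho)=\sum_i\operatorname{Tr}(\rho M_i)\,|i\rangle\langle i|$. With $\Delta_\Phi=\Phi_M-\Phi_N$, Choi operator $J(\mathcal{S})=\sum_{ij}\mathcal{S}(|i\rangle\langle j|)\otimes|i\rangle\langle j|$, ME-norm $\|\mathcal{S}\|_{\mathrm{ME}}=\|J(\mathcal{S})/d\|_1$ and diamond norm $\|\mathcal{S}\|_\diamond=\max_{\rho_{AA'}}\|(\mathcal{S}\otimes I_{A'})\rho_{AA'}\|_1$, the pair is called Maximal Entanglement Worst Case (MEWC) if $\|\Delta_\Phi\|_\diamond=d\|\Delta_\Phi\|_{\mathrm{ME}}$, i.e. a maximally entangled input is maximally suboptimal for discriminating the two channels with uniform priors. *)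

theory Defs
  imports "Jordan_Normal_Form.Schur_Decomposition" "HOL-Computational_Algebra.Polynomial"
begin

definition msum :: "nat \<Rightarrow> nat \<Rightarrow> ('i \<Rightarrow> complex mat) \<Rightarrow> 'i set \<Rightarrow> complex mat" where
  "msum n m f I = mat n m (\<lambda>(r,c). \<Sum>x\<in>I. f x $$ (r,c))"

text \<open>Kronecker (tensor) product; index (i,k) of A (x) B is i * dim B + k.\<close>
definition kron :: "complex mat \<Rightarrow> complex mat \<Rightarrow> complex mat" where
  "kron A B = mat (dim_row A * dim_row B) (dim_col A * dim_col B)
     (\<lambda>(i,j). A $$ (i div dim_row B, j div dim_col B) * B $$ (i mod dim_row B, j mod dim_col B))"

definition ketbra :: "nat \<Rightarrow> nat \<Rightarrow> nat \<Rightarrow> complex mat" where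
  "ketbra n i j = mat n n (\<lambda>(k,l). if k = i \<and> l = j then 1 else 0)"

definition trace :: "complex mat \<Rightarrow> complex" where
  "trace A = (\<Sum>i<dim_row A. A $$ (i,i))"

definition hermitian :: "complex mat \<Rightarrow> bool" where
  "hermitian A \<longleftrightarrow> mat_adjoint A = A"

definition psd :: "nat \<Rightarrow> complex mat \<Rightarrow> bool" where
  "psd n A \<longleftrightarrow> A \<in> carrier_mat n n \<and> hermitian A \<and>
     (\<forall>v \<in> carrier_vec n. 0 \<le> Re (\<Sum>i<n. cnj (v $ i) * (A *\<^sub>v v) $ i))"

definition density :: "nat \<Rightarrow> complex mat \<Rightarrow> bool" where
  "density n \<rho> \<longleftrightarrow> psd n \<rho> \<and> trace \<rho> = 1"

text \<open>Trace norm = sum of the singular values (square roots of the eigenvalues of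
  A^* A, counted with algebraic multiplicity).\<close>
definition trace_norm :: "complex mat \<Rightarrow> real" where
  "trace_norm A = (let p = char_poly (mat_adjoint A * A) in
     \<Sum>z\<in>{z. poly p z = 0}. real (order z p) * sqrt (Re z))"

text \<open>Linear maps are represented as functions on matrices; S maps din x din to dout x dout.\<close>

definition choi :: "(complex mat \<Rightarrow> complex mat) \<Rightarrow> nat \<Rightarrow> nat \<Rightarrow> complex mat" where
  "choi S din dout = msum (dout * din) (dout * din)
     (\<lambda>(i,j). kron (S (ketbra din i j)) (ketbra din i j)) ({..<din} \<times> {..<din})"

definition me_norm :: "(complex mat \<Rightarrow> complex mat) \<Rightarrow> nat \<Rightarrow> nat \<Rightarrow> real" where
  "me_norm S din dout = trace_norm ((1 / of_nat din) \<cdot>\<^sub>m choi S din dout)"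

text \<open>(S (x) id_{A'}) applied to rho on A (x) A', dim A = din, dim A' = k, extended linearly
  from the basis |i><j| (x) |a><b|.\<close>
definition tensor_id :: "(complex mat \<Rightarrow> complex mat) \<Rightarrow> nat \<Rightarrow> nat \<Rightarrow> nat \<Rightarrow> complex mat \<Rightarrow> complex mat" where
  "tensor_id S din dout k \<rho> = msum (dout * k) (dout * k)
     (\<lambda>((i,j),(a,b)). \<rho> $$ (i * k + a, j * k + b) \<cdot>\<^sub>m kron (S (ketbra din i j)) (ketbra k a b))
     (({..<din} \<times> {..<din}) \<times> ({..<k} \<times> {..<k}))"

text \<open>Diamond norm: maximum over states on A (x) A', with A' a copy of A.\<close>
definition diamond_norm :: "(complex mat \<Rightarrow> complex mat) \<Rightarrow> nat \<Rightarrow> nat \<Rightarrow> real" where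
  "diamond_norm S din dout =
     Sup {trace_norm (tensor_id S din dout din \<rho>) | \<rho>. density (din * din) \<rho>}"

definition is_povm :: "nat \<Rightarrow> nat \<Rightarrow> (nat \<Rightarrow> complex mat) \<Rightarrow> bool" where
  "is_povm d m M \<longleftrightarrow> (\<forall>i<m. psd d (M i)) \<and> msum d d M {..<m} = 1\<^sub>m d"

definition meas_channel :: "nat \<Rightarrow> (nat \<Rightarrow> complex mat) \<Rightarrow> complex mat \<Rightarrow> complex mat" where
  "meas_channel m M \<rho> = msum m m (\<lambda>i. trace (\<rho> * M i) \<cdot>\<^sub>m ketbra m i i) {..<m}"

definition delta_channel :: "nat \<Rightarrow> (nat \<Rightarrow> complex mat) \<Rightarrow> (nat \<Rightarrow> complex mat) \<Rightarrow> complex mat \<Rightarrow> complex mat" where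
  "delta_channel m M N \<rho> = meas_channel m M \<rho> - meas_channel m N \<rho>"

definition MEWC :: "nat \<Rightarrow> nat \<Rightarrow> (nat \<Rightarrow> complex mat) \<Rightarrow> (nat \<Rightarrow> complex mat) \<Rightarrow> bool" where
  "MEWC d m M N \<longleftrightarrow>
     diamond_norm (delta_channel m M N) d m = real d * me_norm (delta_channel m M N) d m"

end

theory Submission
  imports Defs
begin

lemma det2: assumes "(A :: 'a :: comm_ring_1 mat) \<in> carrier_mat 2 2"
  shows "det A = A$$(0,0)*A$$(1,1) - A$$(0,1)*A$$(1,0)"
proof -
  have "det A = (\<Sum>i<2. A $$ (i,0) * cofactor A i 0)" by (rule laplace_expansion_column[OF assms], simp)
  also have "\<dots> = A$$(0,0)*A$$(1,1) - A$$(0,1)*A$$(1,0)"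
    using assms unfolding cofactor_def
    by (simp add: numeral_2_eq_2 det_single mat_delete_def)
  finally show ?thesis .
qed

lemma adj_dim[simp]: "dim_row (mat_adjoint A) = dim_col A" "dim_col (mat_adjoint A) = dim_row A"
  unfolding mat_adjoint_def by auto

lemma adj_idx[simp]: "i < dim_col A \<Longrightarrow> j < dim_row A \<Longrightarrow> mat_adjoint (A::complex mat) $$ (i,j) = cnj (A$$(j,i))"
  unfolding mat_adjoint_def by (simp add: mat_of_rows_def col_def)

lemma char_poly2: assumes "(A :: complex mat) \<in> carrier_mat 2 2"
  shows "char_poly A = [: det A, -(A$$(0,0) + A$$(1,1)), 1 :]"
proof -
  have "char_poly A = det (char_poly_matrix A)" unfolding char_poly_def ..
  also have "\<dots> = [: det A, -(A$$(0,0) + A$$(1,1)), 1 :]"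
    apply (subst det2) using assms apply (simp add: char_poly_matrix_def)
    using assms by (simp add: char_poly_matrix_def det2 numeral_2_eq_2 algebra_simps)
  finally show ?thesis .
qed

lemma rootsum:
  fixes r1 r2 :: complex and f :: "complex \<Rightarrow> real"
  assumes p: "p = ([:-r1,1:]*[:-r2,1:])^2"
  shows "(\<Sum>z\<in>{z. poly p z = 0}. real (order z p) * f z) = 2*(f r1 + f r2)"
proof -
  have p': "p = [:-r1,1:]^2 * [:-r2,1:]^2" unfolding p by (rule power_mult_distrib)
  have nz: "[:-r1,1:]^2 \<noteq> 0" "[:-r2,1:]^2 \<noteq> (0::complex poly)" by auto
  have roots: "{z. poly p z = 0} = {r1, r2}" using p' by auto
  show ?thesis
  proof (cases "r1 = r2")
    case True
    have "p = [:-r1,1:]^4" using p' True by (simp add: power_add[symmetric])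
    hence "order r1 p = 4" by (simp add: order_power_n_n)
    thus ?thesis using roots True by simp
  next
    case False
    have o1: "order r1 p = 2" unfolding p' using False
      by (subst order_mult, use nz in simp, simp add: order_power_n_n order_0I)
    have o2: "order r2 p = 2" unfolding p' using False
      by (subst order_mult, use nz in simp, simp add: order_power_n_n order_0I)
    show ?thesis using roots False o1 o2 by simp
  qed
qed


definition blk :: "complex mat \<Rightarrow> complex mat" where
 "blk Y = mat 4 4 (\<lambda>(r,s). if r div 2 = s div 2 then (if r < 2 then 1 else -1) * Y$$(r mod 2, s mod 2) else 0)"

definition tn2 :: "complex mat \<Rightarrow> real" where
 "tn2 Y = sqrt ((cmod (Y$$(0,0)))^2 + (cmod (Y$$(0,1)))^2 + (cmod (Y$$(1,0)))^2 + (cmod (Y$$(1,1)))^2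
     + 2 * cmod (Y$$(0,0)*Y$$(1,1) - Y$$(0,1)*Y$$(1,0)))"

lemma less4: "(r::nat) < 4 \<Longrightarrow> r = 0 \<or> r = 1 \<or> r = 2 \<or> r = 3" by auto
lemma less2: "(r::nat) < 2 \<Longrightarrow> r = 0 \<or> r = 1" by auto
lemma sum4: "(\<Sum>i<(4::nat). f i) = f 0 + f 1 + f 2 + (f 3::'a::comm_monoid_add)"
  by (simp add: numeral_eq_Suc lessThan_Suc add.assoc add.commute add.left_commute)
lemma sum2: "(\<Sum>i<(2::nat). f i) = f 0 + (f 1::'a::comm_monoid_add)"
  by (simp add: numeral_eq_Suc lessThan_Suc add.commute)

lemma blk_adj: assumes Y: "Y \<in> carrier_mat 2 2"
  shows "mat_adjoint (blk Y) * blk Y = four_block_mat (mat_adjoint Y * Y) (0\<^sub>m 2 2) (0\<^sub>m 2 2) (mat_adjoint Y * Y)"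
proof (rule eq_matI)
  fix i j assume i: "i < dim_row (four_block_mat (mat_adjoint Y * Y) (0\<^sub>m 2 2) (0\<^sub>m 2 2) (mat_adjoint Y * Y))"
    and j: "j < dim_col (four_block_mat (mat_adjoint Y * Y) (0\<^sub>m 2 2) (0\<^sub>m 2 2) (mat_adjoint Y * Y))"
  from i j Y have i4: "i < 4" and j4: "j < 4" by auto
  show "(mat_adjoint (blk Y) * blk Y) $$ (i, j) = four_block_mat (mat_adjoint Y * Y) (0\<^sub>m 2 2) (0\<^sub>m 2 2) (mat_adjoint Y * Y) $$ (i, j)"
    using less4[OF i4] less4[OF j4] Y
    by (elim disjE) (auto simp: blk_def scalar_prod_def four_block_mat_def atLeast0LessThan sum4 sum2 algebra_simps)
qed (use Y in \<open>auto simp: blk_def\<close>)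



lemma cp_block: assumes G: "(G::complex mat) \<in> carrier_mat 2 2"
  shows "char_poly (four_block_mat G (0\<^sub>m 2 2) (0\<^sub>m 2 2) G) = char_poly G * char_poly G"
proof -
  let ?cm = "\<lambda> A. [:0, 1:] \<cdot>\<^sub>m 1\<^sub>m (dim_row A) + map_mat (\<lambda>a. [:- a:]) A"
  have "char_poly (four_block_mat G (0\<^sub>m 2 2) (0\<^sub>m 2 2) G) = det (?cm (four_block_mat G (0\<^sub>m 2 2) (0\<^sub>m 2 2) G))"
    unfolding char_poly_defs ..
  also have "?cm (four_block_mat G (0\<^sub>m 2 2) (0\<^sub>m 2 2) G) = four_block_mat (?cm G) (0\<^sub>m 2 2) (0\<^sub>m 2 2) (?cm G)"
    by (rule eq_matI, insert G, auto)
  also have "det \<dots> = det (?cm G) * det (?cm G)"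
    by (rule det_four_block_mat_lower_left_zero, insert G, auto)
  also have "\<dots> = char_poly G * char_poly G" unfolding char_poly_defs ..
  finally show ?thesis .
qed

lemma cmod_det_le: "2 * cmod (a*d - b*c) \<le> (cmod a)^2 + (cmod b)^2 + (cmod c)^2 + (cmod d)^2"
proof -
  have "cmod (a*d - b*c) \<le> cmod a * cmod d + cmod b * cmod c"
    by (metis norm_mult norm_triangle_ineq4)
  moreover have "2 * (cmod a * cmod d) \<le> (cmod a)^2 + (cmod d)^2"
    using sum_squares_bound[of "cmod a" "cmod d"] by (simp add: power2_eq_square)
  moreover have "2 * (cmod b * cmod c) \<le> (cmod b)^2 + (cmod c)^2"
    using sum_squares_bound[of "cmod b" "cmod c"] by (simp add: power2_eq_square)
  ultimately show ?thesis by linarith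
qed

lemma cnjsq: "cnj z * z = (complex_of_real (cmod z))^2" "z * cnj z = (complex_of_real (cmod z))^2"
  by (simp_all add: complex_norm_square[symmetric] mult.commute)

lemma TN: assumes Y: "Y \<in> carrier_mat 2 2"
  shows "trace_norm (blk Y) = 2 * tn2 Y"
proof -
  define a where "a = Y$$(0,0)"
  define b where "b = Y$$(0,1)"
  define c where "c = Y$$(1,0)"
  define d where "d = Y$$(1,1)"
  define G where "G = mat_adjoint Y * Y"
  have G: "G \<in> carrier_mat 2 2" using Y unfolding G_def by auto
  define t where "t = (cmod a)^2 + (cmod b)^2 + (cmod c)^2 + (cmod d)^2"
  define \<delta> where "\<delta> = (cmod (a*d - b*c))^2"
  have G00: "G$$(0,0) = cnj a * a + cnj c * c" using Y unfolding G_def a_def c_def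
    by (simp add: scalar_prod_def atLeast0LessThan sum2)
  have G11: "G$$(1,1) = cnj b * b + cnj d * d" using Y unfolding G_def b_def d_def
    by (simp add: scalar_prod_def atLeast0LessThan sum2)
  have G01: "G$$(0,1) = cnj a * b + cnj c * d" using Y unfolding G_def a_def b_def c_def d_def
    by (simp add: scalar_prod_def atLeast0LessThan sum2)
  have G10: "G$$(1,0) = cnj b * a + cnj d * c" using Y unfolding G_def a_def b_def c_def d_def
    by (simp add: scalar_prod_def atLeast0LessThan sum2)
  have tr: "G$$(0,0) + G$$(1,1) = of_real t"
    unfolding G00 G11 t_def by (simp add: cnjsq)
  have dt: "det G = of_real \<delta>"
  proof -
    have "det G = cnj (a*d - b*c) * (a*d - b*c)"
      unfolding det2[OF G] G00 G11 G01 G10 by (simp add: algebra_simps)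
    also have "\<dots> = of_real \<delta>" unfolding \<delta>_def of_real_power by (rule cnjsq(1))
    finally show ?thesis .
  qed
  have cp: "char_poly G = [: of_real \<delta>, - of_real t, 1 :]"
    unfolding char_poly2[OF G] dt tr[symmetric] by simp
  have t0: "0 \<le> t" unfolding t_def by simp
  have d0: "0 \<le> \<delta>" unfolding \<delta>_def by simp
  have tdet: "2 * cmod (a*d - b*c) \<le> t" unfolding t_def by (rule cmod_det_le)
  have disc: "0 \<le> t^2 - 4*\<delta>"
  proof -
    have "(2 * cmod (a*d - b*c))^2 \<le> t^2" using tdet by (intro power_mono) auto
    thus ?thesis unfolding \<delta>_def by (simp add: power_mult_distrib)
  qed
  define s where "s = sqrt (t^2 - 4*\<delta>)"
  have s0: "0 \<le> s" and s2: "s^2 = t^2 - 4*\<delta>" unfolding s_def using disc by auto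
  have st: "s \<le> t"
  proof -
    have "s^2 \<le> t^2" using s2 d0 by simp
    thus ?thesis using t0 s0 by (simp add: power2_le_iff_abs_le)
  qed
  define r1 where "r1 = (t + s)/2"
  define r2 where "r2 = (t - s)/2"
  have r10: "0 \<le> r1" and r20: "0 \<le> r2" unfolding r1_def r2_def using s0 st t0 by auto
  have rsum: "r1 + r2 = t" and rprod: "r1 * r2 = \<delta>"
    unfolding r1_def r2_def using s2 by (auto simp: field_simps power2_eq_square)
  have fac: "[: of_real \<delta>, - of_real t, 1 :] = [:- complex_of_real r1, 1:] * [:- complex_of_real r2, 1:]"
    by (simp add: rsum[symmetric] rprod[symmetric] algebra_simps)
  have "char_poly (mat_adjoint (blk Y) * blk Y) = char_poly G * char_poly G"
    unfolding blk_adj[OF Y] G_def[symmetric] by (rule cp_block[OF G])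
  also have "\<dots> = ([:- complex_of_real r1, 1:] * [:- complex_of_real r2, 1:])^2"
    unfolding cp fac by (simp add: power2_eq_square)
  finally have cpb: "char_poly (mat_adjoint (blk Y) * blk Y) = ([:- complex_of_real r1, 1:] * [:- complex_of_real r2, 1:])^2" .
  have "trace_norm (blk Y) = 2 * (sqrt r1 + sqrt r2)"
    unfolding trace_norm_def Let_def cpb by (subst rootsum[OF refl]) simp
  also have "sqrt r1 + sqrt r2 = tn2 Y"
  proof -
    have "(sqrt r1 + sqrt r2)^2 = r1 + r2 + 2 * sqrt (r1 * r2)"
      using r10 r20 by (simp add: power2_eq_square algebra_simps real_sqrt_mult)
    also have "\<dots> = t + 2 * cmod (a*d - b*c)" unfolding rsum rprod \<delta>_def by simp
    finally have "(sqrt r1 + sqrt r2)^2 = t + 2 * cmod (a*d - b*c)" .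
    hence "sqrt r1 + sqrt r2 = sqrt (t + 2 * cmod (a*d - b*c))"
      by (metis add_nonneg_nonneg real_sqrt_ge_zero real_sqrt_unique r10 r20)
    thus ?thesis unfolding tn2_def t_def a_def b_def c_def d_def by simp
  qed
  finally show ?thesis .
qed


definition phi :: "complex mat \<Rightarrow> complex mat \<Rightarrow> complex mat" where
  "phi \<rho> R = mat 2 2 (\<lambda>(a,b). \<Sum>i<2. \<Sum>j<2. R$$(j,i) * \<rho>$$(2*i+a, 2*j+b))"

lemma sumP2: "(\<Sum>x\<in>{..<(2::nat)}\<times>{..<(2::nat)}. f x) = f (0,0) + f (0,1) + f (1,0) + (f (1,1)::'a::comm_monoid_add)"
  by (simp add: sum.cartesian_product' sum2 add.assoc)

lemma sumP4: "(\<Sum>x\<in>({..<(2::nat)}\<times>{..<(2::nat)})\<times>({..<(2::nat)}\<times>{..<(2::nat)}). f x) =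
   (\<Sum>y\<in>{..<(2::nat)}\<times>{..<(2::nat)}. (\<Sum>z\<in>{..<(2::nat)}\<times>{..<(2::nat)}. (f (y,z)::'a::comm_monoid_add)))"
  by (simp add: sum.cartesian_product)

lemma trace_ketbra: assumes "A \<in> carrier_mat 2 2" "i < 2" "j < 2"
  shows "trace (ketbra 2 i j * A) = A$$(j,i)"
  using assms less2[of i] less2[of j]
  by (auto simp: trace_def ketbra_def scalar_prod_def atLeast0LessThan sum2)

lemma povm_facts: assumes "is_povm 2 2 M"
  shows "M 0 \<in> carrier_mat 2 2" "M 1 \<in> carrier_mat 2 2"
    "\<And>i j. i < 2 \<Longrightarrow> j < 2 \<Longrightarrow> M 1 $$ (i,j) = (if i = j then 1 else 0) - M 0 $$ (i,j)"
    "hermitian (M 0)"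
proof -
  have p0: "psd 2 (M 0)" and p1: "psd 2 (M 1)" using assms unfolding is_povm_def by auto
  thus "M 0 \<in> carrier_mat 2 2" "M 1 \<in> carrier_mat 2 2" "hermitian (M 0)" unfolding psd_def by auto
  have s: "msum 2 2 M {..<2} = 1\<^sub>m 2" using assms unfolding is_povm_def by auto
  fix i j :: nat assume ij: "i < 2" "j < 2"
  have "msum 2 2 M {..<2} $$ (i,j) = (1\<^sub>m 2) $$ (i,j)" using s by simp
  thus "M 1 $$ (i,j) = (if i = j then 1 else 0) - M 0 $$ (i,j)"
    using ij unfolding msum_def by (auto simp: sum2) (metis add_diff_cancel_left', metis add.commute add_diff_cancel_left' diff_0)
qed

lemma delta_ketbra: assumes M: "is_povm 2 2 M" and N: "is_povm 2 2 N" and ij: "i < 2" "j < 2"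
  shows "delta_channel 2 M N (ketbra 2 i j) =
    mat 2 2 (\<lambda>(p,q). if p = q then (if p = 0 then 1 else -1) * (M 0 - N 0)$$(j,i) else 0)"
proof -
  note fM = povm_facts[OF M] and fN = povm_facts[OF N]
  show ?thesis
    apply (rule eq_matI)
    using ij fM(1,2) fN(1,2) fM(3)[OF ij(2) ij(1)] fN(3)[OF ij(2) ij(1)]
      trace_ketbra[OF fM(1) ij] trace_ketbra[OF fM(2) ij] trace_ketbra[OF fN(1) ij] trace_ketbra[OF fN(2) ij]
    by (auto simp: delta_channel_def meas_channel_def msum_def trace_ketbra sum2 ketbra_def)
qed



lemma kron_idx: assumes "A \<in> carrier_mat 2 2" "B \<in> carrier_mat 2 2" "r < 4" "s < 4"
  shows "kron A B $$ (r,s) = A $$ (r div 2, s div 2) * B $$ (r mod 2, s mod 2)"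
  using assms by (simp add: kron_def)

lemma tensor_blk: assumes M: "is_povm 2 2 M" and N: "is_povm 2 2 N"
  shows "tensor_id (delta_channel 2 M N) 2 2 2 \<rho> = blk (phi \<rho> (M 0 - N 0))"
proof -
  define D where "D = M 0 - N 0"
  define sg where "sg = (\<lambda>p::nat. if p = 0 then 1 else (-1::complex))"
  have dk: "\<And>i j. i < 2 \<Longrightarrow> j < 2 \<Longrightarrow> delta_channel 2 M N (ketbra 2 i j) = mat 2 2 (\<lambda>(p,q). if p = q then sg p * D$$(j,i) else 0)"
    using delta_ketbra[OF M N] unfolding D_def sg_def by auto
  show ?thesis unfolding D_def[symmetric]
  proof (rule eq_matI)
    fix r s assume "r < dim_row (blk (phi \<rho> D))" "s < dim_col (blk (phi \<rho> D))"
    hence r: "r < 4" and s: "s < 4" by (auto simp: blk_def)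
    have r2: "r div 2 < 2" "r mod 2 < 2" and s2: "s div 2 < 2" "s mod 2 < 2" using r s by auto
    have "tensor_id (delta_channel 2 M N) 2 2 2 \<rho> $$ (r, s) =
      (\<Sum>x\<in>({..<2} \<times> {..<2}) \<times> ({..<2} \<times> {..<2}).
         ((\<lambda>((i,j),(a,b)). \<rho> $$ (i * 2 + a, j * 2 + b) \<cdot>\<^sub>m kron (delta_channel 2 M N (ketbra 2 i j)) (ketbra 2 a b)) x) $$ (r,s))"
      unfolding tensor_id_def msum_def using r s by simp
    also have "\<dots> = (\<Sum>x\<in>({..<2} \<times> {..<2}) \<times> ({..<2} \<times> {..<2}).
         (case x of ((i,j),(a,b)) \<Rightarrow> \<rho> $$ (i * 2 + a, j * 2 + b) * ((if r div 2 = s div 2 then sg (r div 2) * D$$(j,i) else 0)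
            * (if r mod 2 = a \<and> s mod 2 = b then 1 else 0))))"
    proof (rule sum.cong[OF refl])
      fix x assume xin: "x \<in> ({..<2::nat} \<times> {..<2::nat}) \<times> ({..<2::nat} \<times> {..<2::nat})"
      obtain i j a b where x: "x = ((i,j),(a,b))" by (cases x) auto
      from xin have ij: "i < 2" "j < 2" and ab: "a < 2" "b < 2" unfolding x by auto
      have c1: "delta_channel 2 M N (ketbra 2 i j) \<in> carrier_mat 2 2" using dk[OF ij] by simp
      have c2: "ketbra 2 a b \<in> carrier_mat 2 2" by (simp add: ketbra_def)
      have dr: "dim_row (kron (delta_channel 2 M N (ketbra 2 i j)) (ketbra 2 a b)) = 4"
         "dim_col (kron (delta_channel 2 M N (ketbra 2 i j)) (ketbra 2 a b)) = 4"
        using c1 c2 by (auto simp: kron_def)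
      have eq: "(\<rho> $$ (i * 2 + a, j * 2 + b) \<cdot>\<^sub>m kron (delta_channel 2 M N (ketbra 2 i j)) (ketbra 2 a b)) $$ (r,s) =
         \<rho> $$ (i * 2 + a, j * 2 + b) * ((if r div 2 = s div 2 then sg (r div 2) * D$$(j,i) else 0)
            * (if r mod 2 = a \<and> s mod 2 = b then 1 else 0))"
      proof -
        have "(\<rho> $$ (i * 2 + a, j * 2 + b) \<cdot>\<^sub>m kron (delta_channel 2 M N (ketbra 2 i j)) (ketbra 2 a b)) $$ (r,s)
          = \<rho> $$ (i * 2 + a, j * 2 + b) * (delta_channel 2 M N (ketbra 2 i j) $$ (r div 2, s div 2) * ketbra 2 a b $$ (r mod 2, s mod 2))"
          using dr r s by (simp only: index_smult_mat kron_idx[OF c1 c2 r s])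
        also have "\<dots> = \<rho> $$ (i * 2 + a, j * 2 + b) * ((if r div 2 = s div 2 then sg (r div 2) * D$$(j,i) else 0)
            * (if r mod 2 = a \<and> s mod 2 = b then 1 else 0))"
          unfolding dk[OF ij] using r2 s2 by (simp add: ketbra_def)
        finally show ?thesis .
      qed
      thus "((\<lambda>((i,j),(a,b)). \<rho> $$ (i * 2 + a, j * 2 + b) \<cdot>\<^sub>m kron (delta_channel 2 M N (ketbra 2 i j)) (ketbra 2 a b)) x) $$ (r,s) =
         (case x of ((i,j),(a,b)) \<Rightarrow> \<rho> $$ (i * 2 + a, j * 2 + b) * ((if r div 2 = s div 2 then sg (r div 2) * D$$(j,i) else 0)
            * (if r mod 2 = a \<and> s mod 2 = b then 1 else 0)))" unfolding x by simp
    qed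
    also have "\<dots> = (\<Sum>ij\<in>{..<2} \<times> {..<2}. (case ij of (i,j) \<Rightarrow>
         \<rho> $$ (i * 2 + r mod 2, j * 2 + s mod 2) * (if r div 2 = s div 2 then sg (r div 2) * D$$(j,i) else 0)))"
      apply (subst sum.cartesian_product')
      apply (rule sum.cong[OF refl])
      apply clarify
      by (simp add: sum.cartesian_product' sum2)
    also have "\<dots> = blk (phi \<rho> D) $$ (r, s)"
      using r s r2 s2 by (simp add: blk_def phi_def sumP2 sum2 sg_def algebra_simps)
    finally show "tensor_id (delta_channel 2 M N) 2 2 2 \<rho> $$ (r, s) = blk (phi \<rho> D) $$ (r, s)" .
  qed (auto simp: tensor_id_def msum_def blk_def D_def)
qed



definition psd2 :: "complex mat \<Rightarrow> bool" where
  "psd2 A \<longleftrightarrow> Im (A$$(0,0)) = 0 \<and> Im (A$$(1,1)) = 0 \<and> 0 \<le> Re (A$$(0,0)) \<and> 0 \<le> Re (A$$(1,1))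
     \<and> A$$(1,0) = cnj (A$$(0,1)) \<and> (cmod (A$$(0,1)))^2 \<le> Re (A$$(0,0)) * Re (A$$(1,1))"

lemma prod_bound: fixes u v a1 a2 b1 b2 :: real
  assumes "0 \<le> u" "0 \<le> v" "0 \<le> a1" "0 \<le> a2" "0 \<le> b1" "0 \<le> b2" "u^2 \<le> a1*a2" "v^2 \<le> b1*b2"
  shows "2*u*v \<le> a1*b1 + a2*b2"
proof -
  have "(2*u*v)^2 = 4 * u^2 * v^2" by (simp add: power_mult_distrib)
  also have "\<dots> \<le> 4 * (a1*a2) * (b1*b2)" using assms by (intro mult_mono) auto
  also have "\<dots> \<le> (a1*b1 + a2*b2)^2"
  proof -
    have "0 \<le> (a1*b1 - a2*b2)^2" by simp
    thus ?thesis by (simp add: power2_eq_square algebra_simps)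
  qed
  finally have "(2*u*v)^2 \<le> (a1*b1 + a2*b2)^2" .
  moreover have "0 \<le> a1*b1 + a2*b2" using assms by simp
  ultimately show ?thesis by (rule power2_le_imp_le)
qed

lemma re_cnj_mult_ge: "- (cmod p * cmod q) \<le> Re (cnj p * q)"
proof -
  have "\<bar>Re (cnj p * q)\<bar> \<le> cmod (cnj p * q)" by (rule abs_Re_le_cmod)
  thus ?thesis by (simp add: norm_mult)
qed

lemma tr_psd2: assumes R: "psd2 R" and M: "psd2 M"
  shows "0 \<le> Re (R$$(0,0) * M$$(0,0) + R$$(1,0) * M$$(0,1) + R$$(0,1) * M$$(1,0) + R$$(1,1) * M$$(1,1))"
proof -
  define p where "p = R$$(0,1)"
  define q where "q = M$$(0,1)"
  have pb: "2 * cmod p * cmod q \<le> Re (R$$(0,0)) * Re (M$$(0,0)) + Re (R$$(1,1)) * Re (M$$(1,1))"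
    using R M unfolding psd2_def p_def q_def by (intro prod_bound) auto
  have "Re (R$$(1,0) * M$$(0,1)) + Re (R$$(0,1) * M$$(1,0)) = 2 * Re (cnj p * q)"
    using R M unfolding psd2_def p_def q_def by simp
  moreover have "Re (R$$(0,0) * M$$(0,0)) = Re (R$$(0,0)) * Re (M$$(0,0))"
    "Re (R$$(1,1) * M$$(1,1)) = Re (R$$(1,1)) * Re (M$$(1,1))"
    using R M unfolding psd2_def by auto
  moreover have "Re (R$$(0,0) * M$$(0,0) + R$$(1,0) * M$$(0,1) + R$$(0,1) * M$$(1,0) + R$$(1,1) * M$$(1,1))
     = Re (R$$(0,0) * M$$(0,0)) + Re (R$$(1,0) * M$$(0,1)) + Re (R$$(0,1) * M$$(1,0)) + Re (R$$(1,1) * M$$(1,1))"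
    by (simp only: plus_complex.sel)
  moreover have "0 \<le> cmod p * cmod q" by simp
  ultimately show ?thesis using re_cnj_mult_ge[of p q] pb by linarith
qed

definition form2 :: "complex mat \<Rightarrow> complex \<Rightarrow> complex \<Rightarrow> complex" where
  "form2 H v0 v1 = cnj v0 * H$$(0,0) * v0 + cnj v0 * H$$(0,1) * v1 + cnj v1 * H$$(1,0) * v0 + cnj v1 * H$$(1,1) * v1"

lemma form2_nonneg: assumes H: "psd2 H" shows "0 \<le> Re (form2 H v0 v1)"
proof -
  define a where "a = Re (H$$(0,0))"
  define b where "b = Re (H$$(1,1))"
  define h where "h = H$$(0,1)"
  have H00: "H$$(0,0) = of_real a" and H11: "H$$(1,1) = of_real b" and H10: "H$$(1,0) = cnj h"
    using H unfolding psd2_def a_def b_def h_def by (auto simp: complex_eq_iff)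
  have a0: "0 \<le> a" and b0: "0 \<le> b" and hab: "(cmod h)^2 \<le> a*b" using H unfolding psd2_def a_def b_def h_def by auto
  have e1: "Re (cnj v0 * of_real a * v0) = a * (cmod v0)^2" unfolding cmod_power2 by (simp add: power2_eq_square algebra_simps)
  have e2: "Re (cnj v1 * of_real b * v1) = b * (cmod v1)^2" unfolding cmod_power2 by (simp add: power2_eq_square algebra_simps)
  have e3: "Re (cnj v0 * h * v1) + Re (cnj v1 * cnj h * v0) = 2 * Re (cnj v0 * (h * v1))"
    by (simp add: algebra_simps)
  have e4: "- (cmod v0 * (cmod h * cmod v1)) \<le> Re (cnj v0 * (h * v1))" using re_cnj_mult_ge[of v0 "h*v1"] by (simp add: norm_mult)
  have e5: "2 * cmod h * (cmod v0 * cmod v1) \<le> a * (cmod v0)^2 + b * (cmod v1)^2"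
    by (rule prod_bound) (use a0 b0 hab in \<open>auto simp: power_mult_distrib\<close>)
  have "Re (form2 H v0 v1) = a * (cmod v0)^2 + b * (cmod v1)^2 + 2 * Re (cnj v0 * (h * v1))"
    unfolding form2_def H00 H11 H10 h_def[symmetric] plus_complex.sel using e1 e2 e3 by linarith
  moreover have "0 \<le> cmod h * (cmod v0 * cmod v1)" by simp
  moreover have "cmod v0 * (cmod h * cmod v1) = cmod h * (cmod v0 * cmod v1)" by (simp add: ac_simps)
  ultimately show ?thesis using e4 e5 by linarith
qed



lemma form2_re: assumes "H$$(0,0) = of_real a" "H$$(1,1) = of_real b" "H$$(1,0) = cnj h" "H$$(0,1) = h"
  shows "Re (form2 H v0 v1) = a * (cmod v0)^2 + b * (cmod v1)^2 + 2 * Re (cnj v0 * (h * v1))"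
proof -
  have e1: "Re (cnj v0 * of_real a * v0) = a * (cmod v0)^2" unfolding cmod_power2 by (simp add: power2_eq_square algebra_simps)
  have e2: "Re (cnj v1 * of_real b * v1) = b * (cmod v1)^2" unfolding cmod_power2 by (simp add: power2_eq_square algebra_simps)
  have e3: "Re (cnj v0 * h * v1) + Re (cnj v1 * cnj h * v0) = 2 * Re (cnj v0 * (h * v1))"
    by (simp add: algebra_simps)
  show ?thesis unfolding form2_def assms plus_complex.sel using e1 e2 e3 by linarith
qed

lemma psd2_of_form: assumes h10: "H$$(1,0) = cnj (H$$(0,1))" and h00: "Im (H$$(0,0)) = 0" and h11: "Im (H$$(1,1)) = 0"
  and f: "\<And>v0 v1. 0 \<le> Re (form2 H v0 v1)"
  shows "psd2 H"
proof -
  define a where "a = Re (H$$(0,0))"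
  define b where "b = Re (H$$(1,1))"
  define h where "h = H$$(0,1)"
  have H: "H$$(0,0) = of_real a" "H$$(1,1) = of_real b" "H$$(1,0) = cnj h" "H$$(0,1) = h"
    using h10 h00 h11 unfolding a_def b_def h_def by (auto simp: complex_eq_iff)
  note fr = form2_re[OF H]
  have a0: "0 \<le> a" using f[of 1 0] fr[of 1 0] by simp
  have b0: "0 \<le> b" using f[of 0 1] fr[of 0 1] by simp
  have k: "cnj h * h = of_real ((cmod h)^2)" by (simp add: cnjsq)
  have q1: "Re (form2 H (-h) (of_real a)) = a * (a*b - (cmod h)^2)"
  proof -
    have "Re (cnj (-h) * (h * of_real a)) = - a * (cmod h)^2"
      unfolding cmod_power2 by (simp add: algebra_simps power2_eq_square)
    thus ?thesis unfolding fr by (simp add: power2_eq_square algebra_simps)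
  qed
  have q2: "Re (form2 H (of_real b) (- cnj h)) = b * (a*b - (cmod h)^2)"
  proof -
    have "Re (cnj (of_real b) * (h * (- cnj h))) = - b * (cmod h)^2"
      unfolding cmod_power2 by (simp add: algebra_simps power2_eq_square)
    thus ?thesis unfolding fr by (simp add: power2_eq_square algebra_simps)
  qed
  have q3: "Re (form2 H 1 (- cnj h)) = a + b * (cmod h)^2 - 2 * (cmod h)^2"
  proof -
    have "Re (cnj 1 * (h * (- cnj h))) = -((cmod h)^2)"
      unfolding cmod_power2 by (simp add: algebra_simps power2_eq_square)
    thus ?thesis unfolding fr by (simp add: power2_eq_square algebra_simps)
  qed
  have "(cmod h)^2 \<le> a * b"
  proof (cases "a > 0")
    case True
    have "0 \<le> a * (a*b - (cmod h)^2)" using f q1 by metis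
    thus ?thesis using True by (simp add: zero_le_mult_iff)
  next
    case False
    hence a: "a = 0" using a0 by simp
    show ?thesis
    proof (cases "b > 0")
      case True
      have "0 \<le> b * (a*b - (cmod h)^2)" using f q2 by metis
      thus ?thesis using True by (simp add: zero_le_mult_iff)
    next
      case False
      hence "b = 0" using b0 by simp
      thus ?thesis using f[of 1 "- cnj h"] q3 a by simp
    qed
  qed
  thus ?thesis unfolding psd2_def using H a0 b0 h00 h11 by simp
qed



lemma psd4_facts: assumes "psd 4 \<rho>"
  shows "\<rho> \<in> carrier_mat 4 4" "\<And>k l. k < 4 \<Longrightarrow> l < 4 \<Longrightarrow> \<rho>$$(l,k) = cnj (\<rho>$$(k,l))"
    "\<And>w. 0 \<le> Re (\<Sum>k<4. \<Sum>l<4. cnj (w k) * \<rho>$$(k,l) * w l)"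
proof -
  show c: "\<rho> \<in> carrier_mat 4 4" using assms unfolding psd_def by auto
  have h: "mat_adjoint \<rho> = \<rho>" using assms unfolding psd_def hermitian_def by auto
  fix k l :: nat assume "k < 4" "l < 4"
  thus "\<rho>$$(l,k) = cnj (\<rho>$$(k,l))" using c adj_idx[of l \<rho> k] h by auto
next
  have c: "\<rho> \<in> carrier_mat 4 4" using assms unfolding psd_def by auto
  fix w :: "nat \<Rightarrow> complex"
  have "\<forall>v\<in>carrier_vec 4. 0 \<le> Re (\<Sum>i<4. cnj (v $ i) * (\<rho> *\<^sub>v v) $ i)"
    using assms unfolding psd_def by blast
  hence "0 \<le> Re (\<Sum>i<4. cnj (vec 4 w $ i) * (\<rho> *\<^sub>v vec 4 w) $ i)" by (rule bspec[where x="vec 4 w"]) simp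
  also have "(\<Sum>i<4. cnj (vec 4 w $ i) * (\<rho> *\<^sub>v vec 4 w) $ i) = (\<Sum>k<4. \<Sum>l<4. cnj (w k) * \<rho>$$(k,l) * w l)"
    using c by (auto intro!: sum.cong simp: scalar_prod_def sum_distrib_left mult.assoc atLeast0LessThan)
  finally show "0 \<le> Re (\<Sum>k<4. \<Sum>l<4. cnj (w k) * \<rho>$$(k,l) * w l)" .
qed

lemma psd2_herm: assumes "psd2 R" "i < 2" "j < 2" shows "R$$(j,i) = cnj (R$$(i,j))"
  using assms less2[of i] less2[of j] unfolding psd2_def by (auto simp: complex_eq_iff)

lemma im0: "z = cnj z \<Longrightarrow> Im z = 0" by (simp add: complex_eq_iff)

lemma phi_psd: assumes \<rho>: "psd 4 \<rho>" and R: "psd2 R" shows "psd2 (phi \<rho> R)"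
proof -
  note rh = psd4_facts(2)[OF \<rho>]
  note rf = psd4_facts(3)[OF \<rho>]
  note Rh = psd2_herm[OF R]
  have rh': "\<And>i j a b. i < 2 \<Longrightarrow> j < 2 \<Longrightarrow> a < 2 \<Longrightarrow> b < 2 \<Longrightarrow> \<rho>$$(2*j+b, 2*i+a) = cnj (\<rho>$$(2*i+a, 2*j+b))"
  proof -
    fix i j a b :: nat assume "i < 2" "j < 2" "a < 2" "b < 2"
    hence "2*i+a < 4" "2*j+b < 4" by linarith+
    thus "\<rho>$$(2*j+b, 2*i+a) = cnj (\<rho>$$(2*i+a, 2*j+b))" by (rule rh)
  qed
  have rr: "\<rho>$$(1,0) = cnj (\<rho>$$(0,1))" "\<rho>$$(2,0) = cnj (\<rho>$$(0,2))" "\<rho>$$(3,0) = cnj (\<rho>$$(0,3))" "\<rho>$$(2,1) = cnj (\<rho>$$(1,2))" "\<rho>$$(3,1) = cnj (\<rho>$$(1,3))" "\<rho>$$(3,2) = cnj (\<rho>$$(2,3))" "cnj (\<rho>$$(0,0)) = \<rho>$$(0,0)" "cnj (\<rho>$$(1,1)) = \<rho>$$(1,1)" "cnj (\<rho>$$(2,2)) = \<rho>$$(2,2)" "cnj (\<rho>$$(3,3)) = \<rho>$$(3,3)" "\<rho>$$(Suc 0,0) = cnj (\<rho>$$(0,Suc 0))" "\<rho>$$(2,0) = cnj (\<rho>$$(0,2))" "\<rho>$$(3,0) = cnj (\<rho>$$(0,3))" "\<rho>$$(2,Suc 0) = cnj (\<rho>$$(Suc 0,2))" "\<rho>$$(3,Suc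 0) = cnj (\<rho>$$(Suc 0,3))" "\<rho>$$(3,2) = cnj (\<rho>$$(2,3))" "cnj (\<rho>$$(0,0)) = \<rho>$$(0,0)" "cnj (\<rho>$$(Suc 0,Suc 0)) = \<rho>$$(Suc 0,Suc 0)" "cnj (\<rho>$$(2,2)) = \<rho>$$(2,2)" "cnj (\<rho>$$(3,3)) = \<rho>$$(3,3)"
    using rh[of 0 1] rh[of 0 2] rh[of 0 3] rh[of 1 2] rh[of 1 3] rh[of 2 3] rh[of 0 0] rh[of 1 1] rh[of 2 2] rh[of 3 3]
    by (auto simp: complex_eq_iff)
  have p: "\<And>a b. a < 2 \<Longrightarrow> b < 2 \<Longrightarrow> phi \<rho> R $$ (a,b) = (\<Sum>i<2. \<Sum>j<2. R$$(j,i) * \<rho>$$(2*i+a, 2*j+b))"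
    unfolding phi_def by simp
  have herm: "\<And>a b. a < 2 \<Longrightarrow> b < 2 \<Longrightarrow> phi \<rho> R $$ (b,a) = cnj (phi \<rho> R $$ (a,b))"
  proof -
    fix a b :: nat assume ab: "a < 2" "b < 2"
    have "phi \<rho> R $$ (b,a) = (\<Sum>i<2. \<Sum>j<2. R$$(j,i) * \<rho>$$(2*i+b, 2*j+a))" using p ab by simp
    also have "\<dots> = (\<Sum>i<2. \<Sum>j<2. cnj (R$$(i,j) * \<rho>$$(2*j+a, 2*i+b)))"
    proof (intro sum.cong refl)
      fix i j assume "i \<in> {..<2::nat}" "j \<in> {..<2::nat}"
      hence i: "i < 2" and j: "j < 2" by auto
      show "R$$(j,i) * \<rho>$$(2*i+b, 2*j+a) = cnj (R$$(i,j) * \<rho>$$(2*j+a, 2*i+b))"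
        unfolding complex_cnj_mult Rh[OF i j] rh'[OF j i ab] ..
    qed
    also have "\<dots> = cnj (phi \<rho> R $$ (a,b))" unfolding p[OF ab] by (simp add: sum2 add_ac)
    finally show "phi \<rho> R $$ (b,a) = cnj (phi \<rho> R $$ (a,b))" .
  qed
  show ?thesis
  proof (rule psd2_of_form)
    show "phi \<rho> R $$ (1,0) = cnj (phi \<rho> R $$ (0,1))" using herm[of 0 1] by simp
    show "Im (phi \<rho> R $$ (0,0)) = 0" using herm[of 0 0] by (intro im0) simp
    show "Im (phi \<rho> R $$ (1,1)) = 0" using herm[of 1 1] by (intro im0) simp
    fix v0 v1 :: complex
    define vv where "vv = (\<lambda>a::nat. if a = 0 then v0 else v1)"
    define M where "M = mat 2 2 (\<lambda>(i,j). \<Sum>a<2. \<Sum>b<2. cnj (vv a) * vv b * \<rho>$$(2*i+a, 2*j+b))"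
    have Mp: "psd2 M"
    proof (rule psd2_of_form)
      show "M $$ (1,0) = cnj (M $$ (0,1))" unfolding M_def by (simp add: sum2 vv_def rr)
      show "Im (M $$ (0,0)) = 0" unfolding M_def by (intro im0) (simp add: sum2 vv_def rr)
      show "Im (M $$ (1,1)) = 0" unfolding M_def by (intro im0) (simp add: sum2 vv_def rr)
      fix c0 c1 :: complex
      define cc where "cc = (\<lambda>a::nat. if a = 0 then c0 else c1)"
      have eq: "form2 M c0 c1 = (\<Sum>k<4. \<Sum>l<4. cnj (cc (k div 2) * vv (k mod 2)) * \<rho>$$(k,l) * (cc (l div 2) * vv (l mod 2)))"
        unfolding form2_def M_def by (simp add: sum4 sum2 cc_def vv_def) (simp add: algebra_simps)
      show "0 \<le> Re (form2 M c0 c1)" unfolding eq by (rule rf)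
    qed
    have "form2 (phi \<rho> R) v0 v1 = R$$(0,0) * M$$(0,0) + R$$(1,0) * M$$(0,1) + R$$(0,1) * M$$(1,0) + R$$(1,1) * M$$(1,1)"
      unfolding form2_def M_def phi_def by (simp add: sum2 vv_def algebra_simps)
    thus "0 \<le> Re (form2 (phi \<rho> R) v0 v1)" using tr_psd2[OF R Mp] by simp
  qed
qed



lemma tn2_le: assumes A: "psd2 A" and B: "psd2 B"
  and X: "\<And>i j. i < 2 \<Longrightarrow> j < 2 \<Longrightarrow> X$$(i,j) = A$$(i,j) - B$$(i,j)"
  shows "tn2 X \<le> Re (A$$(0,0)) + Re (A$$(1,1)) + Re (B$$(0,0)) + Re (B$$(1,1))"
proof -
  define a1 where "a1 = Re (A$$(0,0))"
  define a2 where "a2 = Re (A$$(1,1))"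
  define b1 where "b1 = Re (B$$(0,0))"
  define b2 where "b2 = Re (B$$(1,1))"
  define x where "x = A$$(0,1)"
  define y where "y = B$$(0,1)"
  have A': "A$$(0,0) = of_real a1" "A$$(1,1) = of_real a2" "A$$(1,0) = cnj x"
    using A unfolding psd2_def a1_def a2_def x_def by (auto simp: complex_eq_iff)
  have B': "B$$(0,0) = of_real b1" "B$$(1,1) = of_real b2" "B$$(1,0) = cnj y"
    using B unfolding psd2_def b1_def b2_def y_def by (auto simp: complex_eq_iff)
  have a10: "0 \<le> a1" and a20: "0 \<le> a2" and xa: "(cmod x)^2 \<le> a1 * a2"
    using A unfolding psd2_def a1_def a2_def x_def by auto
  have b10: "0 \<le> b1" and b20: "0 \<le> b2" and yb: "(cmod y)^2 \<le> b1 * b2"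
    using B unfolding psd2_def b1_def b2_def y_def by auto
  define p where "p = a1 - b1"
  define q where "q = a2 - b2"
  define e where "e = (cmod (x - y))^2"
  define S where "S = a1 + a2 + b1 + b2"
  have X00: "X$$(0,0) = of_real p" and X11: "X$$(1,1) = of_real q" and X01: "X$$(0,1) = x - y"
    and X10: "X$$(1,0) = cnj (x - y)"
    using X[of 0 0] X[of 1 1] X[of 0 1] X[of 1 0] A' B' unfolding p_def q_def x_def y_def by auto
  have detX: "X$$(0,0) * X$$(1,1) - X$$(0,1) * X$$(1,0) = of_real (p*q - e)"
    unfolding X00 X11 X01 X10 e_def cnjsq(2) by simp
  have cm: "cmod (complex_of_real p * complex_of_real q - (complex_of_real (cmod (x - y)))^2) = \<bar>p*q - e\<bar>"
  proof -
    have "complex_of_real p * complex_of_real q - (complex_of_real (cmod (x - y)))^2 = of_real (p*q - e)"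
      by (simp add: e_def)
    thus ?thesis by (simp only: norm_of_real)
  qed
  have tn: "tn2 X = sqrt (p^2 + 2*e + q^2 + 2 * \<bar>p*q - e\<bar>)"
    unfolding tn2_def detX unfolding X00 X11 X01 X10 e_def by (simp add: cm e_def del: complex_cnj_diff)
  have ek: "e \<le> (a1 + b2) * (a2 + b1)"
  proof -
    have "cmod (x - y) \<le> cmod x + cmod y" by (rule norm_triangle_ineq4)
    hence "e \<le> (cmod x + cmod y)^2" unfolding e_def by (intro power_mono) auto
    also have "\<dots> = (cmod x)^2 + (cmod y)^2 + 2 * cmod x * cmod y" by (simp add: power2_eq_square algebra_simps)
    also have "\<dots> \<le> a1*a2 + b1*b2 + (a1*b1 + a2*b2)"
      using xa yb prod_bound[of "cmod x" "cmod y" a1 a2 b1 b2] a10 a20 b10 b20 xa yb by simp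
    also have "\<dots> = (a1 + b2) * (a2 + b1)" by (simp add: algebra_simps)
    finally show ?thesis .
  qed
  have key: "p^2 + 2*e + q^2 + 2 * \<bar>p*q - e\<bar> \<le> S^2"
  proof (cases "e \<le> p*q")
    case True
    have "\<bar>p + q\<bar> \<le> S" unfolding p_def q_def S_def using a10 a20 b10 b20 by simp
    hence "\<bar>p + q\<bar>^2 \<le> S^2" by (intro power_mono) auto
    thus ?thesis using True by (simp add: power2_eq_square algebra_simps)
  next
    case False
    have "(p - q)^2 + 4 * ((a1 + b2) * (a2 + b1)) = S^2" unfolding p_def q_def S_def
      by (simp add: power2_eq_square algebra_simps)
    thus ?thesis using False ek by (simp add: power2_eq_square algebra_simps)
  qed
  have S0: "0 \<le> S" unfolding S_def using a10 a20 b10 b20 by simp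
  have "tn2 X \<le> sqrt (S^2)" unfolding tn by (rule real_sqrt_le_mono[OF key])
  also have "\<dots> = S" using S0 by simp
  finally show ?thesis unfolding S_def a1_def a2_def b1_def b2_def .
qed



definition Lf :: "real \<Rightarrow> real \<Rightarrow> complex \<Rightarrow> real" where
  "Lf \<alpha> \<beta> c = (\<bar>\<alpha>+\<beta>\<bar> + sqrt ((\<alpha>-\<beta>)^2 + 4 * (cmod c)^2)) / 2"

lemma Lf_facts: fixes \<alpha> \<beta> :: real and c :: complex
  defines "s \<equiv> sqrt ((\<alpha>-\<beta>)^2 + 4 * (cmod c)^2)"
  shows "0 \<le> s" "s^2 = (\<alpha>-\<beta>)^2 + 4 * (cmod c)^2" "\<bar>\<alpha>-\<beta>\<bar> \<le> s" "Lf \<alpha> \<beta> c = (\<bar>\<alpha>+\<beta>\<bar> + s)/2"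
proof -
  show s0: "0 \<le> s" unfolding s_def by simp
  show s2: "s^2 = (\<alpha>-\<beta>)^2 + 4 * (cmod c)^2" unfolding s_def by simp
  have "\<bar>\<alpha>-\<beta>\<bar>^2 \<le> s^2" using s2 by simp
  thus "\<bar>\<alpha>-\<beta>\<bar> \<le> s" using s0 by (simp add: abs_le_square_iff power2_le_iff_abs_le)
  show "Lf \<alpha> \<beta> c = (\<bar>\<alpha>+\<beta>\<bar> + s)/2" unfolding Lf_def s_def ..
qed

lemma LPQ: fixes \<alpha> \<beta> :: real and c :: complex
  defines "L \<equiv> Lf \<alpha> \<beta> c"
  shows "0 \<le> L + \<alpha>" "0 \<le> L + \<beta>" "0 \<le> L - \<alpha>" "0 \<le> L - \<beta>"
    "(cmod c)^2 \<le> (L + \<alpha>) * (L + \<beta>)" "(cmod c)^2 \<le> (L - \<alpha>) * (L - \<beta>)"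
proof -
  define s where "s = sqrt ((\<alpha>-\<beta>)^2 + 4 * (cmod c)^2)"
  note f = Lf_facts[of \<alpha> \<beta> c, folded s_def]
  have L: "L = (\<bar>\<alpha>+\<beta>\<bar> + s)/2" unfolding L_def using f(4) .
  define lp where "lp = (\<alpha> + \<beta> + s)/2"
  define lm where "lm = (\<alpha> + \<beta> - s)/2"
  have Llp: "\<bar>lp\<bar> \<le> L" and Llm: "\<bar>lm\<bar> \<le> L" unfolding L lp_def lm_def using f(1) by auto
  have h1: "\<alpha> - \<beta> \<le> s" "\<beta> - \<alpha> \<le> s" using f(3) abs_le_iff[of "\<alpha> - \<beta>" s] by auto
  have h2: "\<alpha>+\<beta> \<le> \<bar>\<alpha>+\<beta>\<bar>" "-(\<alpha>+\<beta>) \<le> \<bar>\<alpha>+\<beta>\<bar>" by auto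
  show "0 \<le> L + \<alpha>" unfolding L using h1 h2 by (simp add: field_simps)
  show "0 \<le> L + \<beta>" unfolding L using h1 h2 by (simp add: field_simps)
  show "0 \<le> L - \<alpha>" unfolding L using h1 h2 by (simp add: field_simps)
  show "0 \<le> L - \<beta>" unfolding L using h1 h2 by (simp add: field_simps)
  have id1: "(L + \<alpha>) * (L + \<beta>) - (cmod c)^2 = (L + lp) * (L + lm)"
    unfolding lp_def lm_def using f(2) by (simp add: field_simps power2_eq_square)
  have id2: "(L - \<alpha>) * (L - \<beta>) - (cmod c)^2 = (L - lp) * (L - lm)"
    unfolding lp_def lm_def using f(2) by (simp add: field_simps power2_eq_square)
  have "0 \<le> (L + lp) * (L + lm)" using Llp Llm by (intro mult_nonneg_nonneg) auto
  thus "(cmod c)^2 \<le> (L + \<alpha>) * (L + \<beta>)" using id1 by simp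
  have "0 \<le> (L - lp) * (L - lm)" using Llp Llm by (intro mult_nonneg_nonneg) auto
  thus "(cmod c)^2 \<le> (L - \<alpha>) * (L - \<beta>)" using id2 by simp
qed

lemma upper: fixes \<alpha> \<beta> :: real
  assumes D: "D$$(0,0) = of_real \<alpha>" "D$$(1,1) = of_real \<beta>" "D$$(1,0) = cnj c" "D$$(0,1) = c"
  and \<rho>: "density 4 \<rho>"
  shows "tn2 (phi \<rho> D) \<le> Lf \<alpha> \<beta> c"
proof -
  define L where "L = Lf \<alpha> \<beta> c"
  note lpq = LPQ[where \<alpha>=\<alpha> and \<beta>=\<beta> and c=c, folded L_def]
  define P where "P = mat 2 2 (\<lambda>(i,j). ((if i = j then of_real L else 0) + D$$(i,j)) / 2)"
  define Q where "Q = mat 2 2 (\<lambda>(i,j). ((if i = j then of_real L else 0) - D$$(i,j)) / 2)"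
  have pP: "psd2 P" unfolding psd2_def P_def using D lpq
    by (simp add: norm_divide power_divide field_simps)
  have pQ: "psd2 Q" unfolding psd2_def Q_def using D lpq
    by (simp add: norm_divide power_divide field_simps norm_minus_commute)
  have ps: "psd 4 \<rho>" and tr: "trace \<rho> = 1" using \<rho> unfolding density_def by auto
  have c4: "\<rho> \<in> carrier_mat 4 4" using ps unfolding psd_def by auto
  have A: "psd2 (phi \<rho> P)" and B: "psd2 (phi \<rho> Q)" using phi_psd[OF ps] pP pQ by auto
  have X: "\<And>i j. i < 2 \<Longrightarrow> j < 2 \<Longrightarrow> phi \<rho> D $$ (i,j) = phi \<rho> P $$ (i,j) - phi \<rho> Q $$ (i,j)"
    unfolding phi_def P_def Q_def by (simp add: sum2 field_simps)
  have "tn2 (phi \<rho> D) \<le> Re (phi \<rho> P $$ (0,0)) + Re (phi \<rho> P $$ (1,1)) + Re (phi \<rho> Q $$ (0,0)) + Re (phi \<rho> Q $$ (1,1))"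
    by (rule tn2_le[OF A B X])
  also have "\<dots> = Re (phi \<rho> P $$ (0,0) + phi \<rho> P $$ (1,1) + phi \<rho> Q $$ (0,0) + phi \<rho> Q $$ (1,1))" by simp
  also have "phi \<rho> P $$ (0,0) + phi \<rho> P $$ (1,1) + phi \<rho> Q $$ (0,0) + phi \<rho> Q $$ (1,1) = of_real L * trace \<rho>"
  proof -
    have PQ: "\<And>i j. i<2 \<Longrightarrow> j<2 \<Longrightarrow> P$$(j,i) + Q$$(j,i) = (if i = j then of_real L else 0)"
      unfolding P_def Q_def by (simp add: add_divide_distrib[symmetric])
    have s: "\<And>a. a < 2 \<Longrightarrow> phi \<rho> P $$ (a,a) + phi \<rho> Q $$ (a,a) = (\<Sum>i<2. \<Sum>j<2. (P$$(j,i) + Q$$(j,i)) * \<rho>$$(2*i+a, 2*j+a))"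
      unfolding phi_def by (simp add: sum.distrib distrib_right)
    have s2: "\<And>a. a < 2 \<Longrightarrow> phi \<rho> P $$ (a,a) + phi \<rho> Q $$ (a,a) = of_real L * (\<rho>$$(a,a) + \<rho>$$(2+a,2+a))"
      unfolding s by (simp add: sum2 PQ distrib_left)
    have "phi \<rho> P $$ (0,0) + phi \<rho> P $$ (1,1) + phi \<rho> Q $$ (0,0) + phi \<rho> Q $$ (1,1) =
      (phi \<rho> P $$ (0,0) + phi \<rho> Q $$ (0,0)) + (phi \<rho> P $$ (1,1) + phi \<rho> Q $$ (1,1))" by (simp add: algebra_simps)
    also have "\<dots> = of_real L * (\<rho>$$(0,0) + \<rho>$$(2,2)) + of_real L * (\<rho>$$(1,1) + \<rho>$$(3,3))"
    proof -
      have e0: "phi \<rho> P $$ (0,0) + phi \<rho> Q $$ (0,0) = of_real L * (\<rho>$$(0,0) + \<rho>$$(2,2))" using s2[of 0] by simp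
      have e1: "phi \<rho> P $$ (1,1) + phi \<rho> Q $$ (1,1) = of_real L * (\<rho>$$(1,1) + \<rho>$$(3,3))" using s2[of 1] by simp
      show ?thesis by (simp only: e0 e1)
    qed
    also have "\<dots> = of_real L * trace \<rho>" unfolding trace_def
      using c4 by (simp add: sum4 algebra_simps)
    finally show ?thesis .
  qed
  finally show ?thesis using tr unfolding L_def by simp
qed



lemma attain: assumes R: "psd2 R" and trR: "R$$(0,0) + R$$(1,1) = 1"
  shows "\<exists>\<rho>. density 4 \<rho> \<and> tn2 (phi \<rho> D) = cmod (D$$(0,0) * R$$(0,0) + D$$(1,0) * R$$(0,1) + D$$(0,1) * R$$(1,0) + D$$(1,1) * R$$(1,1))"
proof -
  define \<rho> where "\<rho> = mat 4 4 (\<lambda>(k,l). if k mod 2 = 0 \<and> l mod 2 = 0 then R$$(k div 2, l div 2) else 0)"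
  have Rh: "cnj (R$$(0,0)) = R$$(0,0)" "cnj (R$$(1,1)) = R$$(1,1)" "R$$(1,0) = cnj (R$$(0,1))"
    using R unfolding psd2_def by (auto simp: complex_eq_iff)
  have c4: "\<rho> \<in> carrier_mat 4 4" unfolding \<rho>_def by simp
  have herm: "hermitian \<rho>" unfolding hermitian_def
  proof (rule eq_matI)
    fix i j assume "i < dim_row \<rho>" "j < dim_col \<rho>"
    hence i: "i < 4" and j: "j < 4" using c4 by auto
    show "mat_adjoint \<rho> $$ (i, j) = \<rho> $$ (i, j)"
      using c4 i j less4[OF i] less4[OF j] by (auto simp: \<rho>_def Rh Rh[unfolded One_nat_def])
  qed (use c4 in auto)
  have form: "\<forall>v\<in>carrier_vec 4. 0 \<le> Re (\<Sum>i<4. cnj (v $ i) * (\<rho> *\<^sub>v v) $ i)"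
  proof
    fix v :: "complex vec" assume v: "v \<in> carrier_vec 4"
    have "(\<Sum>i<4. cnj (v $ i) * (\<rho> *\<^sub>v v) $ i) = form2 R (v$0) (v$2)"
      using v c4 by (simp add: sum4 scalar_prod_def atLeast0LessThan \<rho>_def form2_def algebra_simps)
    thus "0 \<le> Re (\<Sum>i<4. cnj (v $ i) * (\<rho> *\<^sub>v v) $ i)" using form2_nonneg[OF R] by simp
  qed
  have tr: "trace \<rho> = 1" unfolding trace_def using c4 trR by (simp add: sum4 \<rho>_def)
  have dens: "density 4 \<rho>" unfolding density_def psd_def using c4 herm form tr by auto
  define z where "z = D$$(0,0) * R$$(0,0) + D$$(1,0) * R$$(0,1) + D$$(0,1) * R$$(1,0) + D$$(1,1) * R$$(1,1)"
  have ph: "phi \<rho> D $$ (0,0) = z" "phi \<rho> D $$ (0,1) = 0" "phi \<rho> D $$ (1,0) = 0" "phi \<rho> D $$ (1,1) = 0"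
    unfolding phi_def z_def \<rho>_def by (simp_all add: sum2)
  have "tn2 (phi \<rho> D) = cmod z" unfolding tn2_def ph by simp
  thus ?thesis using dens unfolding z_def by blast
qed



lemma key_real: fixes \<alpha> \<beta> \<gamma> :: real
  defines "\<delta> \<equiv> \<alpha>*\<beta> - \<gamma>^2"
  shows "(\<bar>\<alpha>+\<beta>\<bar> + sqrt ((\<alpha>-\<beta>)^2 + 4*\<gamma>^2)) / 2 = sqrt (\<alpha>^2 + \<beta>^2 + 2*\<gamma>^2 + 2*\<bar>\<delta>\<bar>) \<longleftrightarrow> \<delta> = 0"
proof -
  define t where "t = \<alpha> + \<beta>"
  define s where "s = sqrt ((\<alpha>-\<beta>)^2 + 4*\<gamma>^2)"
  define T where "T = sqrt (\<alpha>^2 + \<beta>^2 + 2*\<gamma>^2 + 2*\<bar>\<delta>\<bar>)"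
  have s0: "0 \<le> s" unfolding s_def by simp
  have T0: "0 \<le> T" unfolding T_def by simp
  have s2: "s^2 = t^2 - 4*\<delta>"
  proof -
    have "0 \<le> (\<alpha>-\<beta>)^2 + 4*\<gamma>^2" by simp
    hence "s^2 = (\<alpha>-\<beta>)^2 + 4*\<gamma>^2" unfolding s_def by simp
    thus ?thesis unfolding t_def \<delta>_def by (simp add: power2_eq_square algebra_simps)
  qed
  have T2: "T^2 = t^2 - 2*\<delta> + 2*\<bar>\<delta>\<bar>"
  proof -
    have "0 \<le> \<alpha>^2 + \<beta>^2 + 2*\<gamma>^2 + 2*\<bar>\<delta>\<bar>" by simp
    hence "T^2 = \<alpha>^2 + \<beta>^2 + 2*\<gamma>^2 + 2*\<bar>\<delta>\<bar>" unfolding T_def by simp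
    thus ?thesis unfolding t_def \<delta>_def by (simp add: power2_eq_square algebra_simps)
  qed
  have tt: "\<bar>t\<bar>^2 = t^2" by simp
  show ?thesis unfolding t_def[symmetric] s_def[symmetric] T_def[symmetric]
  proof
    assume eq: "(\<bar>t\<bar> + s) / 2 = T"
    show "\<delta> = 0"
    proof (rule ccontr)
      assume nz: "\<delta> \<noteq> 0"
      show False
      proof (cases "\<delta> > 0")
        case True
        hence Tq: "T^2 = \<bar>t\<bar>^2" using T2 by simp
        have Tt: "T = \<bar>t\<bar>" by (rule power2_eq_imp_eq[OF Tq T0 abs_ge_zero])
        have sl: "s^2 < \<bar>t\<bar>^2" using s2 True by simp
        have "s < \<bar>t\<bar>" by (rule power_less_imp_less_base[OF sl abs_ge_zero])
        thus False using eq Tt by simp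
      next
        case False
        hence neg: "\<delta> < 0" using nz by simp
        hence Tq: "T^2 = s^2" using T2 s2 by simp
        have Ts: "T = s" by (rule power2_eq_imp_eq[OF Tq T0 s0])
        have sl: "\<bar>t\<bar>^2 < s^2" using s2 neg by simp
        have "\<bar>t\<bar> < s" by (rule power_less_imp_less_base[OF sl s0])
        thus False using eq Ts by simp
      qed
    qed
  next
    assume d: "\<delta> = 0"
    have sq: "s^2 = \<bar>t\<bar>^2" using s2 d by simp
    have "s = \<bar>t\<bar>" by (rule power2_eq_imp_eq[OF sq s0 abs_ge_zero])
    moreover have Tq: "T^2 = \<bar>t\<bar>^2" using T2 d by simp
    have "T = \<bar>t\<bar>" by (rule power2_eq_imp_eq[OF Tq T0 abs_ge_zero])
    ultimately show "(\<bar>t\<bar> + s) / 2 = T" by simp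
  qed
qed



lemma choi_blk: assumes M: "is_povm 2 2 M" and N: "is_povm 2 2 N"
  shows "(1 / of_nat 2) \<cdot>\<^sub>m choi (delta_channel 2 M N) 2 2 = blk (mat 2 2 (\<lambda>(q,q'). (M 0 - N 0)$$(q',q) / 2))"
proof -
  define D where "D = M 0 - N 0"
  define sg where "sg = (\<lambda>p::nat. if p = 0 then 1 else (-1::complex))"
  have dk: "\<And>i j. i < 2 \<Longrightarrow> j < 2 \<Longrightarrow> delta_channel 2 M N (ketbra 2 i j) = mat 2 2 (\<lambda>(p,q). if p = q then sg p * D$$(j,i) else 0)"
    using delta_ketbra[OF M N] unfolding D_def sg_def by auto
  show ?thesis unfolding D_def[symmetric]
  proof (rule eq_matI)
    fix r s assume "r < dim_row (blk (mat 2 2 (\<lambda>(q,q'). D$$(q',q) / 2)))" "s < dim_col (blk (mat 2 2 (\<lambda>(q,q'). D$$(q',q) / 2)))"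
    hence r: "r < 4" and s: "s < 4" by (auto simp: blk_def)
    have r2: "r div 2 < 2" "r mod 2 < 2" and s2: "s div 2 < 2" "s mod 2 < 2" using r s by auto
    have "choi (delta_channel 2 M N) 2 2 $$ (r, s) =
      (\<Sum>x\<in>{..<2} \<times> {..<2}. ((\<lambda>(i,j). kron (delta_channel 2 M N (ketbra 2 i j)) (ketbra 2 i j)) x) $$ (r,s))"
      unfolding choi_def msum_def using r s by simp
    also have "\<dots> = (\<Sum>x\<in>{..<2} \<times> {..<2}. (case x of (i,j) \<Rightarrow>
        (if r div 2 = s div 2 then sg (r div 2) * D$$(j,i) else 0) * (if r mod 2 = i \<and> s mod 2 = j then 1 else 0)))"
    proof (rule sum.cong[OF refl])
      fix x assume xin: "x \<in> {..<2::nat} \<times> {..<2::nat}"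
      obtain i j where x: "x = (i,j)" by (cases x) auto
      from xin have ij: "i < 2" "j < 2" unfolding x by auto
      have c1: "delta_channel 2 M N (ketbra 2 i j) \<in> carrier_mat 2 2" using dk[OF ij] by simp
      have c2: "ketbra 2 i j \<in> carrier_mat 2 2" by (simp add: ketbra_def)
      have "kron (delta_channel 2 M N (ketbra 2 i j)) (ketbra 2 i j) $$ (r,s)
          = delta_channel 2 M N (ketbra 2 i j) $$ (r div 2, s div 2) * ketbra 2 i j $$ (r mod 2, s mod 2)"
        by (rule kron_idx[OF c1 c2 r s])
      also have "\<dots> = (if r div 2 = s div 2 then sg (r div 2) * D$$(j,i) else 0) * (if r mod 2 = i \<and> s mod 2 = j then 1 else 0)"
        unfolding dk[OF ij] using r2 s2 by (simp add: ketbra_def)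
      finally show "((\<lambda>(i,j). kron (delta_channel 2 M N (ketbra 2 i j)) (ketbra 2 i j)) x) $$ (r,s) =
        (case x of (i,j) \<Rightarrow> (if r div 2 = s div 2 then sg (r div 2) * D$$(j,i) else 0) * (if r mod 2 = i \<and> s mod 2 = j then 1 else 0))"
        unfolding x by simp
    qed
    also have "\<dots> = (if r div 2 = s div 2 then sg (r div 2) * D$$(s mod 2, r mod 2) else 0)"
      using r2 s2 less2[of "r mod 2"] less2[of "s mod 2"] by (auto simp: sumP2)
    finally have ch: "choi (delta_channel 2 M N) 2 2 $$ (r, s) = (if r div 2 = s div 2 then sg (r div 2) * D$$(s mod 2, r mod 2) else 0)" .
    have dc: "dim_row (choi (delta_channel 2 M N) 2 2) = 4" "dim_col (choi (delta_channel 2 M N) 2 2) = 4"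
      unfolding choi_def msum_def by auto
    show "((1 / of_nat 2) \<cdot>\<^sub>m choi (delta_channel 2 M N) 2 2) $$ (r, s) = blk (mat 2 2 (\<lambda>(q,q'). D$$(q',q) / 2)) $$ (r, s)"
      using r s r2 s2 dc by (simp add: ch blk_def sg_def)
  qed (auto simp: choi_def msum_def blk_def)
qed



lemma attain2: fixes \<alpha> \<beta> r0 r1 :: real
  assumes D: "D$$(0,0) = of_real \<alpha>" "D$$(1,1) = of_real \<beta>" "D$$(1,0) = cnj c" "D$$(0,1) = c"
  and r: "0 \<le> r0" "0 \<le> r1" "r0 + r1 = 1" "(cmod w)^2 \<le> r0*r1"
  shows "\<exists>\<rho>. density 4 \<rho> \<and> tn2 (phi \<rho> D) = \<bar>\<alpha>*r0 + \<beta>*r1 + 2 * Re (cnj c * w)\<bar>"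
proof -
  define R where "R = mat 2 2 (\<lambda>(i,j). if i=0 then (if j=0 then of_real r0 else w) else (if j=0 then cnj w else of_real r1))"
  have RR: "R$$(0,0) = of_real r0" "R$$(0,1) = w" "R$$(1,0) = cnj w" "R$$(1,1) = of_real r1" unfolding R_def by auto
  have pR: "psd2 R" unfolding psd2_def RR using r by simp
  have tR: "R$$(0,0) + R$$(1,1) = 1" unfolding RR using r(3) by (metis of_real_1 of_real_add)
  obtain \<rho> where \<rho>: "density 4 \<rho>" and tn: "tn2 (phi \<rho> D) = cmod (D$$(0,0) * R$$(0,0) + D$$(1,0) * R$$(0,1) + D$$(0,1) * R$$(1,0) + D$$(1,1) * R$$(1,1))"
    using attain[OF pR tR] by blast
  have "D$$(0,0) * R$$(0,0) + D$$(1,0) * R$$(0,1) + D$$(0,1) * R$$(1,0) + D$$(1,1) * R$$(1,1) = of_real (\<alpha>*r0 + \<beta>*r1 + 2 * Re (cnj c * w))"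
    unfolding RR D by (simp add: complex_eq_iff algebra_simps)
  hence "tn2 (phi \<rho> D) = \<bar>\<alpha>*r0 + \<beta>*r1 + 2 * Re (cnj c * w)\<bar>" unfolding tn by (simp only: norm_of_real)
  thus ?thesis using \<rho> by blast
qed

lemma attainL: fixes \<alpha> \<beta> :: real
  assumes D: "D$$(0,0) = of_real \<alpha>" "D$$(1,1) = of_real \<beta>" "D$$(1,0) = cnj c" "D$$(0,1) = c"
  shows "\<exists>\<rho>. density 4 \<rho> \<and> tn2 (phi \<rho> D) = Lf \<alpha> \<beta> c"
proof -
  define s where "s = sqrt ((\<alpha>-\<beta>)^2 + 4 * (cmod c)^2)"
  define \<gamma> where "\<gamma> = cmod c"
  note f = Lf_facts[of \<alpha> \<beta> c, folded s_def]
  have s2: "s^2 = (\<alpha>-\<beta>)^2 + 4 * \<gamma>^2" using f(2) unfolding \<gamma>_def .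
  have h1: "\<alpha> - \<beta> \<le> s" "\<beta> - \<alpha> \<le> s" using f(3) abs_le_iff[of "\<alpha> - \<beta>" s] by auto
  show ?thesis
  proof (cases "s = 0")
    case True
    have "(\<alpha>-\<beta>)^2 + 4 * \<gamma>^2 = 0" using s2 True by simp
    hence ab: "\<alpha> = \<beta>" by (smt (verit) zero_le_power2 power2_less_eq_zero_iff)
    obtain \<rho> where "density 4 \<rho>" "tn2 (phi \<rho> D) = \<bar>\<alpha>*1 + \<beta>*0 + 2 * Re (cnj c * 0)\<bar>"
      using attain2[OF D, of 1 0 0] by auto
    moreover have "Lf \<alpha> \<beta> c = \<bar>\<alpha>\<bar>" using f(4) True ab by simp
    ultimately show ?thesis by auto
  next
    case False
    hence s0: "0 < s" using f(1) by simp
    have cc: "\<And>k. cnj c * (of_real k * c) = of_real (k * \<gamma>^2)"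
      unfolding \<gamma>_def by (simp add: mult.left_commute[of "cnj c"] cnjsq(1))
    show ?thesis
    proof (cases "0 \<le> \<alpha> + \<beta>")
      case True
      define lm where "lm = (\<alpha> + \<beta> - s)/2"
      define r0 where "r0 = (\<alpha> - lm)/s"
      define r1 where "r1 = (\<beta> - lm)/s"
      define w where "w = of_real (1/s) * c"
      have r00: "0 \<le> r0" "0 \<le> r1" unfolding r0_def r1_def lm_def using s0 h1 by auto
      have r01: "r0 + r1 = 1" unfolding r0_def r1_def lm_def using s0 by (simp add: field_simps)
      have prod: "(\<alpha> - lm) * (\<beta> - lm) = \<gamma>^2" unfolding lm_def using s2 by (simp add: field_simps power2_eq_square)
      have ww: "(cmod w)^2 \<le> r0 * r1" unfolding w_def r0_def r1_def using prod s0
        by (simp add: norm_mult norm_divide power_mult_distrib \<gamma>_def power2_eq_square field_simps)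
      obtain \<rho> where \<rho>: "density 4 \<rho>" "tn2 (phi \<rho> D) = \<bar>\<alpha>*r0 + \<beta>*r1 + 2 * Re (cnj c * w)\<bar>"
        using attain2[OF D r00 r01 ww] by auto
      have zz: "\<alpha>*r0 + \<beta>*r1 + 2 * Re (cnj c * w) = (\<alpha> + \<beta> + s)/2"
      proof -
        have q: "Re (cnj c * w) = \<gamma>^2 / s" unfolding w_def cc by simp
        have "s * (\<alpha>*r0 + \<beta>*r1 + 2 * Re (cnj c * w)) = \<alpha>*(\<alpha>-lm) + \<beta>*(\<beta>-lm) + 2*\<gamma>^2"
          unfolding q r0_def r1_def using s0 by (simp add: field_simps)
        also have "\<dots> = s * ((\<alpha> + \<beta> + s)/2)" unfolding lm_def using s2 by (simp add: field_simps power2_eq_square)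
        finally show ?thesis using s0 by simp
      qed
      have Lq: "Lf \<alpha> \<beta> c = (\<alpha> + \<beta> + s)/2" using f(4) True by simp
      have "tn2 (phi \<rho> D) = Lf \<alpha> \<beta> c" unfolding \<rho>(2) zz Lq using True s0 by simp
      thus ?thesis using \<rho>(1) by blast
    next
      case False
      define lp where "lp = (\<alpha> + \<beta> + s)/2"
      define r0 where "r0 = (lp - \<alpha>)/s"
      define r1 where "r1 = (lp - \<beta>)/s"
      define w where "w = of_real (-1/s) * c"
      have r00: "0 \<le> r0" "0 \<le> r1" unfolding r0_def r1_def lp_def using s0 h1 by auto
      have r01: "r0 + r1 = 1" unfolding r0_def r1_def lp_def using s0 by (simp add: field_simps)
      have prod: "(lp - \<alpha>) * (lp - \<beta>) = \<gamma>^2" unfolding lp_def using s2 by (simp add: field_simps power2_eq_square)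
      have ww: "(cmod w)^2 \<le> r0 * r1" unfolding w_def r0_def r1_def using prod s0
        by (simp add: norm_mult norm_divide power_mult_distrib \<gamma>_def power2_eq_square field_simps)
      obtain \<rho> where \<rho>: "density 4 \<rho>" "tn2 (phi \<rho> D) = \<bar>\<alpha>*r0 + \<beta>*r1 + 2 * Re (cnj c * w)\<bar>"
        using attain2[OF D r00 r01 ww] by auto
      have zz: "\<alpha>*r0 + \<beta>*r1 + 2 * Re (cnj c * w) = (\<alpha> + \<beta> - s)/2"
      proof -
        have q: "Re (cnj c * w) = -(\<gamma>^2) / s" unfolding w_def cc by simp
        have "s * (\<alpha>*r0 + \<beta>*r1 + 2 * Re (cnj c * w)) = \<alpha>*(lp-\<alpha>) + \<beta>*(lp-\<beta>) - 2*\<gamma>^2"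
          unfolding q r0_def r1_def using s0 by (simp add: field_simps)
        also have "\<dots> = s * ((\<alpha> + \<beta> - s)/2)" unfolding lp_def using s2 by (simp add: field_simps power2_eq_square)
        finally show ?thesis using s0 by simp
      qed
      have Lq: "Lf \<alpha> \<beta> c = - ((\<alpha> + \<beta> - s)/2)" using f(4) False by (simp add: field_simps)
      have "tn2 (phi \<rho> D) = Lf \<alpha> \<beta> c" unfolding \<rho>(2) zz Lq using False s0 by (simp add: abs_if field_simps)
      thus ?thesis using \<rho>(1) by blast
    qed
  qed
qed



theorem corollary2:
  fixes M N :: "nat \<Rightarrow> complex mat"
  assumes "is_povm 2 2 M" and "is_povm 2 2 N" and "M 1 \<noteq> N 1"
  shows "MEWC 2 2 M N \<longleftrightarrow> det (M 0 - N 0) = 0"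
proof -
  note fM = povm_facts[OF assms(1)] and fN = povm_facts[OF assms(2)]
  define D where "D = M 0 - N 0"
  have cD: "D \<in> carrier_mat 2 2" unfolding D_def using fM(1) fN(1) by auto
  have Dij: "\<And>i j. i < 2 \<Longrightarrow> j < 2 \<Longrightarrow> D$$(i,j) = M 0 $$ (i,j) - N 0 $$ (i,j)"
    unfolding D_def using fM(1) fN(1) by auto
  have hM: "\<And>i j. i < 2 \<Longrightarrow> j < 2 \<Longrightarrow> M 0 $$ (j,i) = cnj (M 0 $$ (i,j))"
    using fM(1) fM(4) adj_idx[of _ "M 0"] unfolding hermitian_def by (metis carrier_matD(1) carrier_matD(2))
  have hN: "\<And>i j. i < 2 \<Longrightarrow> j < 2 \<Longrightarrow> N 0 $$ (j,i) = cnj (N 0 $$ (i,j))"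
    using fN(1) fN(4) adj_idx[of _ "N 0"] unfolding hermitian_def by (metis carrier_matD(1) carrier_matD(2))
  have hD: "\<And>i j. i < 2 \<Longrightarrow> j < 2 \<Longrightarrow> D $$ (j,i) = cnj (D $$ (i,j))"
  proof -
    fix i j :: nat assume ij: "i < 2" "j < 2"
    have "D $$ (j,i) = M 0 $$ (j,i) - N 0 $$ (j,i)" using Dij ij by simp
    also have "\<dots> = cnj (M 0 $$ (i,j)) - cnj (N 0 $$ (i,j))" using hM[OF ij] hN[OF ij] by simp
    also have "\<dots> = cnj (D $$ (i,j))" using Dij[OF ij] by simp
    finally show "D $$ (j,i) = cnj (D $$ (i,j))" .
  qed
  define \<alpha> where "\<alpha> = Re (D$$(0,0))"
  define \<beta> where "\<beta> = Re (D$$(1,1))"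
  define c where "c = D$$(0,1)"
  have DD: "D$$(0,0) = of_real \<alpha>" "D$$(1,1) = of_real \<beta>" "D$$(1,0) = cnj c" "D$$(0,1) = c"
    using hD[of 0 0] hD[of 1 1] hD[of 0 1] unfolding \<alpha>_def \<beta>_def c_def by (auto simp: complex_eq_iff)
  define L where "L = Lf \<alpha> \<beta> c"
  define T where "T = sqrt (\<alpha>^2 + \<beta>^2 + 2*(cmod c)^2 + 2*\<bar>\<alpha>*\<beta> - (cmod c)^2\<bar>)"
  have tnr: "\<And>\<rho>. trace_norm (tensor_id (delta_channel 2 M N) 2 2 2 \<rho>) = 2 * tn2 (phi \<rho> D)"
  proof -
    fix \<rho>
    have "phi \<rho> D \<in> carrier_mat 2 2" unfolding phi_def by simp
    thus "trace_norm (tensor_id (delta_channel 2 M N) 2 2 2 \<rho>) = 2 * tn2 (phi \<rho> D)"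
      unfolding tensor_blk[OF assms(1,2)] D_def[symmetric] by (rule TN)
  qed
  have set_eq: "{trace_norm (tensor_id (delta_channel 2 M N) 2 2 2 \<rho>) | \<rho>. density (2*2) \<rho>}
     = {2 * tn2 (phi \<rho> D) | \<rho>. density 4 \<rho>}" unfolding tnr by simp
  have dia: "diamond_norm (delta_channel 2 M N) 2 2 = 2 * L"
    unfolding diamond_norm_def set_eq
  proof (rule cSup_eq_maximum)
    obtain \<rho> where "density 4 \<rho>" "tn2 (phi \<rho> D) = L" using attainL[OF DD] unfolding L_def by blast
    thus "2 * L \<in> {2 * tn2 (phi \<rho> D) | \<rho>. density 4 \<rho>}" by force
    fix x assume "x \<in> {2 * tn2 (phi \<rho> D) | \<rho>. density 4 \<rho>}"
    then obtain \<rho> where "density 4 \<rho>" "x = 2 * tn2 (phi \<rho> D)" by blast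
    thus "x \<le> 2 * L" using upper[OF DD] unfolding L_def by force
  qed
  define Y where "Y = mat 2 2 (\<lambda>(q,q'). D$$(q',q) / 2)"
  have YY: "Y$$(0,0) = of_real (\<alpha>/2)" "Y$$(1,1) = of_real (\<beta>/2)" "Y$$(0,1) = cnj c / 2" "Y$$(1,0) = c / 2"
    unfolding Y_def using DD by auto
  have tnY: "tn2 Y = T / 2"
  proof -
    have cm: "cmod (of_real (\<alpha>/2) * of_real (\<beta>/2) - cnj c / 2 * (c / 2)) = \<bar>\<alpha>*\<beta> - (cmod c)^2\<bar> / 4"
    proof -
      have "of_real (\<alpha>/2) * of_real (\<beta>/2) - cnj c / 2 * (c / 2) = complex_of_real ((\<alpha>*\<beta> - (cmod c)^2) / 4)"
        by (simp add: cnjsq(1)[symmetric] field_simps)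
      thus ?thesis by (simp only: norm_of_real) simp
    qed
    have "tn2 Y = sqrt ((\<alpha>^2 + \<beta>^2 + 2*(cmod c)^2 + 2*\<bar>\<alpha>*\<beta> - (cmod c)^2\<bar>) / 4)"
      unfolding tn2_def YY cm by (simp add: norm_divide power_divide field_simps)
    also have "\<dots> = T / 2" unfolding T_def by (simp add: real_sqrt_divide)
    finally show ?thesis .
  qed
  have me: "me_norm (delta_channel 2 M N) 2 2 = T"
  proof -
    have "me_norm (delta_channel 2 M N) 2 2 = trace_norm (blk Y)"
      unfolding me_norm_def choi_blk[OF assms(1,2)] D_def[symmetric] Y_def ..
    also have "\<dots> = 2 * tn2 Y" by (rule TN) (simp add: Y_def)
    finally show ?thesis using tnY by simp
  qed
  have "MEWC 2 2 M N \<longleftrightarrow> L = T" unfolding MEWC_def dia me by simp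
  also have "\<dots> \<longleftrightarrow> \<alpha>*\<beta> - (cmod c)^2 = 0"
    unfolding L_def T_def Lf_def by (rule key_real)
  also have "\<dots> \<longleftrightarrow> det D = 0"
  proof -
    have "det D = D$$(0,0)*D$$(1,1) - D$$(0,1)*D$$(1,0)" by (rule det2[OF cD])
    also have "\<dots> = of_real (\<alpha>*\<beta> - (cmod c)^2)" unfolding DD by (simp add: cnjsq(2))
    finally have "det D = of_real (\<alpha>*\<beta> - (cmod c)^2)" .
    thus ?thesis by (metis of_real_eq_0_iff)
  qed
  finally show ?thesis unfolding D_def .
qed

end
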